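(* If $f\in\mathcal{C}_n$ and $r\in[-1,1]\setminus\{0\}$, then the function $f_r:\Gamma_+\to\mathbb{R}$ given by $f_r(x_1,\dots,x_n)=\big(f(x_1^r,\dots,x_n^r)\big)^{1/r}$ belongs to $\mathcal{C}_n$.
   Context: $\Gamma_+=\{x\in\mathbb{R}^n: x_i>0\ \forall i\}$. $\mathcal{C}_n$ is the class of functions $f:\Gamma_+\to\mathbb{R}$ which are $C^\infty$, homogeneous of degree one ($f(cx)=cf(x)$ for $c>0$), strictly monotone increasing ($\partial f/\partial x_i>0$ for each $i$), concave, and inverse-concave, meaning $f^*(x_1,\dots,x_n)=-f(x_1^{-1},\dots,x_n^{-1})$ is concave on $\Gamma_+$. *)

theory Defs
  imports "HOL-Analysis.Analysis"
begin

definition pos_cone :: "(real ^ 'n) set" where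
  "pos_cone = {x. \<forall>i. 0 < x $ i}"

fun Ck_on :: "nat \<Rightarrow> (real ^ 'n) set \<Rightarrow> (real ^ 'n \<Rightarrow> real) \<Rightarrow> bool" where
  "Ck_on 0 S f = continuous_on S f"
| "Ck_on (Suc k) S f =
     (\<exists>f'. (\<forall>x\<in>S. (f has_derivative f' x) (at x)) \<and>
           (\<forall>i. Ck_on k S (\<lambda>x. f' x (axis i 1))))"

definition smooth_on :: "(real ^ 'n) set \<Rightarrow> (real ^ 'n \<Rightarrow> real) \<Rightarrow> bool" where
  "smooth_on S f \<longleftrightarrow> (\<forall>k. Ck_on k S f)"

definition class_C :: "(real ^ 'n \<Rightarrow> real) \<Rightarrow> bool" where
  "class_C f \<longleftrightarrow>
     smooth_on pos_cone f \<and>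
     (\<forall>x\<in>pos_cone. \<forall>c>0. f (c *\<^sub>R x) = c * f x) \<and>
     (\<forall>x\<in>pos_cone. \<forall>i. \<exists>D. (f has_derivative D) (at x) \<and> D (axis i 1) > 0) \<and>
     concave_on pos_cone f \<and>
     concave_on pos_cone (\<lambda>x. - f (\<chi> i. inverse (x $ i)))"

end

theory Submission
  imports Defs
begin
lemma diag_deriv:
  fixes x :: "real ^ 'n"
  assumes "\<And>i. (\<phi> has_real_derivative \<phi>' (x$i)) (at (x$i))"
  shows "((\<lambda>y. \<chi> i. \<phi> (y$i)) has_derivative (\<lambda>v. \<chi> i. \<phi>' (x$i) * v$i)) (at x)"
proof -
  have c: "((\<lambda>y. \<phi> (y$i)) has_derivative (\<lambda>v. \<phi>' (x$i) * v$i)) (at x)" for i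
  proof -
    have "((\<lambda>y::real^'n. y$i) has_derivative (\<lambda>v. v$i)) (at x)"
      by (rule bounded_linear.has_derivative[OF bounded_linear_vec_nth]) auto
    from has_derivative_compose[OF this assms[of i, unfolded has_field_derivative_def]]
    show ?thesis by simp
  qed
  have "((\<lambda>y. \<Sum>i\<in>UNIV. \<phi> (y$i) *\<^sub>R (axis i 1 :: real^'n)) has_derivative
        (\<lambda>v. \<Sum>i\<in>UNIV. (\<phi>' (x$i) * v$i) *\<^sub>R (axis i 1 :: real^'n))) (at x)"
    apply (rule has_derivative_sum)
    apply (rule has_derivative_scaleR_left)
    apply (rule c)
    done
  moreover have "\<And>y::real^'n. (\<Sum>i\<in>UNIV. \<phi> (y$i) *\<^sub>R (axis i 1 :: real^'n)) = (\<chi> i. \<phi> (y$i))"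
    by (simp add: vec_eq_iff axis_def if_distrib sum.delta cong: if_cong)
  moreover have "\<And>v::real^'n. (\<Sum>i\<in>UNIV. (\<phi>' (x$i) * v$i) *\<^sub>R (axis i 1 :: real^'n)) = (\<chi> i. \<phi>' (x$i) * v$i)"
    by (simp add: vec_eq_iff axis_def if_distrib sum.delta cong: if_cong)
  ultimately show ?thesis by simp
qed

lemma Ck_Suc_imp: "Ck_on (Suc k) S F \<Longrightarrow> Ck_on k S F"
proof (induction k arbitrary: F)
  case 0
  then obtain F' where "\<forall>x\<in>S. (F has_derivative F' x) (at x)" by auto
  then show ?case
    by (auto intro!: continuous_at_imp_continuous_on has_derivative_continuous)
next
  case (Suc k)
  then obtain F' where "\<forall>x\<in>S. (F has_derivative F' x) (at x)"
     "\<forall>i. Ck_on (Suc k) S (\<lambda>x. F' x (axis i 1))" by auto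
  with Suc.IH show ?case by auto
qed

lemma Ck_const: "Ck_on k S (\<lambda>x. c)"
proof (induction k arbitrary: c)
  case 0 then show ?case by simp
next
  case (Suc k)
  have "\<forall>x\<in>S. ((\<lambda>x. c) has_derivative (\<lambda>h. 0)) (at x)" by simp
  with Suc show ?case by (auto intro!: exI[of _ "\<lambda>x h. 0"])
qed

lemma Ck_add: "Ck_on k S F \<Longrightarrow> Ck_on k S G \<Longrightarrow> Ck_on k S (\<lambda>x. F x + G x)"
proof (induction k arbitrary: F G)
  case 0 then show ?case by (simp add: continuous_on_add)
next
  case (Suc k)
  obtain F' where F: "\<forall>x\<in>S. (F has_derivative F' x) (at x)"
     "\<forall>i. Ck_on k S (\<lambda>x. F' x (axis i 1))" using Suc.prems by auto
  obtain G' where G: "\<forall>x\<in>S. (G has_derivative G' x) (at x)"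
     "\<forall>i. Ck_on k S (\<lambda>x. G' x (axis i 1))" using Suc.prems by auto
  show ?case
    apply simp
    apply (rule exI[of _ "\<lambda>x h. F' x h + G' x h"])
    using F G Suc.IH by (auto intro!: has_derivative_add)
qed

lemma Ck_mult: "Ck_on k S F \<Longrightarrow> Ck_on k S G \<Longrightarrow> Ck_on k S (\<lambda>x. F x * G x)"
proof (induction k arbitrary: F G)
  case 0 then show ?case by (simp add: continuous_on_mult)
next
  case (Suc k)
  obtain F' where F: "\<forall>x\<in>S. (F has_derivative F' x) (at x)"
     "\<forall>i. Ck_on k S (\<lambda>x. F' x (axis i 1))" using Suc.prems by auto
  obtain G' where G: "\<forall>x\<in>S. (G has_derivative G' x) (at x)"
     "\<forall>i. Ck_on k S (\<lambda>x. G' x (axis i 1))" using Suc.prems by auto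
  have Fk: "Ck_on k S F" and Gk: "Ck_on k S G" using Suc.prems Ck_Suc_imp by blast+
  show ?case
    apply simp
    apply (rule exI[of _ "\<lambda>x h. F x * G' x h + F' x h * G x"])
    using F G Suc.IH Fk Gk by (auto intro!: has_derivative_mult Ck_add)
qed

lemma Ck_comp_outer:
  assumes G: "\<And>m t. t \<in> T \<Longrightarrow> (G m has_real_derivative G (Suc m) t) (at t)"
  shows "Ck_on k S F \<Longrightarrow> F ` S \<subseteq> T \<Longrightarrow> Ck_on k S (\<lambda>x. G m (F x))"
proof (induction k arbitrary: F m)
  case 0
  have "continuous_on T (G m)"
    using G by (auto intro!: continuous_at_imp_continuous_on DERIV_isCont)
  then show ?case using 0 by (auto intro: continuous_on_compose2)
next
  case (Suc k)
  obtain F' where F: "\<forall>x\<in>S. (F has_derivative F' x) (at x)"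
     "\<forall>i. Ck_on k S (\<lambda>x. F' x (axis i 1))" using Suc.prems by auto
  have Fk: "Ck_on k S F" using Suc.prems Ck_Suc_imp by blast
  have D: "((\<lambda>x. G m (F x)) has_derivative (\<lambda>h. G (Suc m) (F x) * F' x h)) (at x)" if "x \<in> S" for x
    using has_derivative_compose[OF F(1)[rule_format, OF that] G[of "F x" m, unfolded has_field_derivative_def]]
      that Suc.prems(2) by auto
  show ?case
    apply simp
    apply (rule exI[of _ "\<lambda>x h. G (Suc m) (F x) * F' x h"])
    using D F Suc.IH[OF Fk] Suc.prems(2) by (auto intro!: Ck_mult)
qed

lemma Ck_proj: "Ck_on k S (\<lambda>x::real^'n. x $ j)"
proof (cases k)
  case 0 then show ?thesis by (simp add: continuous_on_component continuous_on_id)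
next
  case (Suc k')
  have "((\<lambda>x::real^'n. x$j) has_derivative (\<lambda>v. v$j)) (at x)" for x
    by (rule bounded_linear.has_derivative[OF bounded_linear_vec_nth]) auto
  then show ?thesis using Suc
    by (auto intro!: exI[of _ "\<lambda>x v. v$j"] Ck_const)
qed

lemma Ck_cong:
  assumes "open S" "\<And>x. x \<in> S \<Longrightarrow> F x = G x"
  shows "Ck_on k S F \<Longrightarrow> Ck_on k S G"
proof (cases k)
  case 0 then show "Ck_on k S F \<Longrightarrow> ?thesis" using assms continuous_on_cong by force
next
  case (Suc k')
  assume "Ck_on k S F"
  then obtain F' where F: "\<forall>x\<in>S. (F has_derivative F' x) (at x)"
     "\<forall>i. Ck_on k' S (\<lambda>x. F' x (axis i 1))" using Suc by auto
  have "\<forall>x\<in>S. (G has_derivative F' x) (at x)"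
    using F(1) has_derivative_transform_within_open[OF _ assms(1)] assms(2) by blast
  then show ?thesis using F(2) Suc by auto
qed

lemma Ck_comp_diag:
  fixes S :: "(real^'n) set"
  assumes P: "\<And>m t. t \<in> T \<Longrightarrow> (P m has_real_derivative P (Suc m) t) (at t)"
    and ST: "\<And>x i. x \<in> S \<Longrightarrow> x $ i \<in> T"
    and SS: "\<And>x. x \<in> S \<Longrightarrow> (\<chi> i. P 0 (x$i)) \<in> S"
    and oS: "open S"
  shows "Ck_on k S F \<Longrightarrow> Ck_on k S (\<lambda>x. F (\<chi> i. P 0 (x$i)))"
proof (induction k arbitrary: F)
  case 0
  have "continuous_on S (\<lambda>x. P 0 (x$i))" for i
    using Ck_comp_outer[where G=P and T=T and k=0 and S=S and F="\<lambda>x. x$i" and m=0] P Ck_proj[of 0 S i] ST by auto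
  then have "continuous_on S (\<lambda>x. \<chi> i. P 0 (x$i))"
    by (auto intro!: continuous_on_vec_lambda)
  then show ?case using 0 SS by (auto intro: continuous_on_compose2)
next
  case (Suc k)
  obtain F' where F: "\<forall>x\<in>S. (F has_derivative F' x) (at x)"
     "\<forall>i. Ck_on k S (\<lambda>x. F' x (axis i 1))" using Suc.prems by auto
  have Dh: "((\<lambda>y. \<chi> i. P 0 (y$i)) has_derivative (\<lambda>v. \<chi> i. P 1 (x$i) * v$i)) (at x)" if "x \<in> S" for x
    by (rule diag_deriv) (use P ST that in auto)
  have D: "((\<lambda>x. F (\<chi> i. P 0 (x$i))) has_derivative (\<lambda>v. F' (\<chi> i. P 0 (x$i)) (\<chi> i. P 1 (x$i) * v$i))) (at x)"
    if "x \<in> S" for x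
    using has_derivative_compose[OF Dh[OF that] F(1)[rule_format, OF SS[OF that]]] .
  have lin: "F' (\<chi> i. P 0 (x$i)) (\<chi> j. P 1 (x$j) * axis i 1 $ j) = F' (\<chi> i. P 0 (x$i)) (axis i 1) * P 1 (x$i)"
    if "x \<in> S" for x i
  proof -
    have bl: "linear (F' (\<chi> i. P 0 (x$i)))"
      using F(1) SS[OF that] has_derivative_linear by blast
    have "(\<chi> j. P 1 (x$j) * axis i 1 $ j) = P 1 (x$i) *\<^sub>R (axis i 1 :: real^'n)"
      by (simp add: vec_eq_iff axis_def)
    then show ?thesis using linear_scale[OF bl] by (simp add: mult.commute)
  qed
  have C: "Ck_on k S (\<lambda>x. F' (\<chi> i. P 0 (x$i)) (axis i 1) * P 1 (x$i))" for i
    apply (rule Ck_mult)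
    using Suc.IH F(2) apply blast
    using Ck_comp_outer[where G="\<lambda>m. P (Suc m)" and T=T and k=k and S=S and F="\<lambda>x. x$i" and m=0] P Ck_proj[of k S i] ST by auto
  show ?case
    apply simp
    apply (rule exI[of _ "\<lambda>x v. F' (\<chi> i. P 0 (x$i)) (\<chi> i. P 1 (x$i) * v$i)"])
    using D C lin Ck_cong[OF oS] by auto
qed

lemma open_pos_cone: "open (pos_cone :: (real^'n) set)"
proof -
  have "(pos_cone :: (real^'n) set) = (\<Inter>i\<in>UNIV. {x. x$i > 0})"
    by (auto simp: pos_cone_def)
  moreover have "open (\<Inter>i\<in>UNIV. {x::real^'n. x$i > 0})"
    by (intro open_INT) (auto simp: open_halfspace_component_gt_cart)
  ultimately show ?thesis by simp
qed

lemma convex_pos_cone: "convex (pos_cone :: (real^'n) set)"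
  unfolding convex_def pos_cone_def
proof (clarify)
  fix x y :: "real^'n" and u v :: real and i
  assume "\<forall>i. 0 < x$i" "\<forall>i. 0 < y$i" "0 \<le> u" "0 \<le> v" "u + v = 1"
  then show "0 < (u *\<^sub>R x + v *\<^sub>R y) $ i"
    by simp (smt (verit) mult_nonneg_nonneg mult_pos_pos)
qed

lemma lin_expand:
  fixes D :: "real^'n \<Rightarrow> real"
  assumes "linear D"
  shows "D v = (\<Sum>i\<in>UNIV. v$i * D (axis i 1))"
proof -
  have "v = (\<Sum>i\<in>UNIV. v$i *\<^sub>R (axis i 1 :: real^'n))"
    by (simp add: vec_eq_iff axis_def if_distrib sum.delta cong: if_cong)
  then have "D v = D (\<Sum>i\<in>UNIV. v$i *\<^sub>R (axis i 1 :: real^'n))" by simp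
  also have "\<dots> = (\<Sum>i\<in>UNIV. v$i * D (axis i 1))"
    by (simp add: linear_sum[OF assms] linear_scale[OF assms])
  finally show ?thesis .
qed

lemma cC_deriv:
  assumes "class_C f" "x \<in> pos_cone"
  shows "\<exists>D. (f has_derivative D) (at x) \<and> (\<forall>i. D (axis i 1) > 0)"
proof -
  have "Ck_on 1 pos_cone f" using assms(1) by (simp add: class_C_def smooth_on_def)
  then obtain D where D: "(f has_derivative D) (at x)" using assms(2) by auto
  have "D (axis i 1) > 0" for i
  proof -
    obtain D' where "(f has_derivative D') (at x)" "D' (axis i 1) > 0"
      using assms unfolding class_C_def by blast
    then show ?thesis using has_derivative_unique[OF D] by auto
  qed
  with D show ?thesis by blast
qed

lemma cC_pos:
  assumes "class_C f" "x \<in> pos_cone"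
  shows "f x > 0"
proof -
  obtain D where D: "(f has_derivative D) (at x)" "\<forall>i. D (axis i 1) > 0"
    using cC_deriv[OF assms] by blast
  have hom: "\<forall>c>0. f (c *\<^sub>R x) = c * f x" using assms unfolding class_C_def by blast
  have "((\<lambda>c::real. c *\<^sub>R x) has_derivative (\<lambda>h. h *\<^sub>R x)) (at 1)"
    by (auto intro!: derivative_eq_intros)
  from has_derivative_compose[OF this, of f D] D(1)
  have "((\<lambda>c. f (c *\<^sub>R x)) has_derivative (\<lambda>h. D (h *\<^sub>R x))) (at 1)" by simp
  then have "((\<lambda>c. c * f x) has_derivative (\<lambda>h. D (h *\<^sub>R x))) (at 1)"
    by (rule has_derivative_transform_within_open[where s="{0<..}"]) (use hom in auto)
  moreover have "((\<lambda>c. c * f x) has_derivative (\<lambda>h. h * f x)) (at 1)"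
    by (auto intro!: derivative_eq_intros)
  ultimately have "(\<lambda>h. D (h *\<^sub>R x)) = (\<lambda>h. h * f x)" by (rule has_derivative_unique)
  then have "D x = f x" by (metis mult_1 scaleR_one)
  moreover have "D x = (\<Sum>i\<in>UNIV. x$i * D (axis i 1))"
    using lin_expand has_derivative_linear[OF D(1)] by blast
  moreover have "(\<Sum>i\<in>UNIV. x$i * D (axis i 1)) > 0"
    using D(2) assms(2) by (intro sum_pos) (auto simp: pos_cone_def)
  ultimately show ?thesis by simp
qed

lemma cC_mono:
  assumes "class_C f" "x \<in> pos_cone" "y \<in> pos_cone" "\<And>i. x$i \<le> y$i"
  shows "f x \<le> f y"
proof -
  let ?g = "\<lambda>t. x + t *\<^sub>R (y - x)"
  have inS: "?g t \<in> pos_cone" if "0 \<le> t" "t \<le> 1" for t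
  proof -
    have "?g t = (1 - t) *\<^sub>R x + t *\<^sub>R y" by (simp add: algebra_simps)
    then show ?thesis using convex_pos_cone[unfolded convex_def] assms(2,3) that by auto
  qed
  have "f (?g 0) \<le> f (?g 1)"
  proof (rule DERIV_nonneg_imp_nondecreasing[of 0 1 "\<lambda>t. f (?g t)"])
    fix t :: real assume t: "0 \<le> t" "t \<le> 1"
    obtain D where D: "(f has_derivative D) (at (?g t))" "\<forall>i. D (axis i 1) > 0"
      using cC_deriv[OF assms(1) inS[OF t]] by blast
    have "(?g has_derivative (\<lambda>h. h *\<^sub>R (y - x))) (at t)"
      by (auto intro!: derivative_eq_intros)
    from has_derivative_compose[OF this D(1)]
    have "((\<lambda>t. f (?g t)) has_derivative (\<lambda>h. h * D (y - x))) (at t)"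
      using linear_scale[OF has_derivative_linear[OF D(1)]] by simp
    then have "DERIV (\<lambda>t. f (?g t)) t :> D (y - x)"
      by (simp add: has_field_derivative_def mult.commute[of _ "D (y - x)"])
    moreover have "D (y - x) \<ge> 0"
      using lin_expand[OF has_derivative_linear[OF D(1)], of "y - x"] D(2) assms(4)
      by (simp add: sum_nonneg less_imp_le)
    ultimately show "\<exists>d. DERIV (\<lambda>t. f (?g t)) t :> d \<and> d \<ge> 0" by blast
  qed simp
  then show ?thesis by simp
qed

definition vpow :: "real \<Rightarrow> real^'n \<Rightarrow> real^'n" where
  "vpow p x = (\<chi> i. x$i powr p)"

lemma vpow_cone: "x \<in> pos_cone \<Longrightarrow> vpow p x \<in> pos_cone"
  by (simp add: vpow_def pos_cone_def less_imp_neq[symmetric])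

lemma powr_concave_ineq:
  fixes a b u v p :: real
  assumes "0 < p" "p \<le> 1" "0 < a" "0 < b" "0 \<le> u" "0 \<le> v" "u + v = 1"
  shows "u * a powr p + v * b powr p \<le> (u * a + v * b) powr p"
proof -
  have q: "1/p \<ge> 1" using assms by simp
  have cv: "convex_on {0<..} (\<lambda>x. x powr (1/p))" by (rule powr_convex[OF q])
  have A: "a powr p > 0" "b powr p > 0" using assms by auto
  have "(u * a powr p + v * b powr p) powr (1/p) \<le> u * (a powr p) powr (1/p) + v * (b powr p) powr (1/p)"
    using cv[unfolded convex_on_def] A assms by auto
  also have "\<dots> = u * a + v * b" using assms by (simp add: powr_powr)
  finally have *: "(u * a powr p + v * b powr p) powr (1/p) \<le> u * a + v * b" .
  have pos: "u * a powr p + v * b powr p \<ge> 0" using A assms by auto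
  have "u * a powr p + v * b powr p = ((u * a powr p + v * b powr p) powr (1/p)) powr p"
    using assms pos by (simp add: powr_powr)
  also have "\<dots> \<le> (u * a + v * b) powr p"
    by (rule powr_mono2) (use assms * in auto)
  finally show ?thesis .
qed

lemma lemA:
  assumes f: "class_C f" and p: "0 < p" "p \<le> 1" and xy: "x \<in> pos_cone" "y \<in> pos_cone"
    and uv: "0 \<le> u" "0 \<le> v" "u + v = 1"
  shows "f (vpow p (u *\<^sub>R x + v *\<^sub>R y)) \<ge> u * f (vpow p x) + v * f (vpow p y)"
proof -
  let ?m = "u *\<^sub>R vpow p x + v *\<^sub>R vpow p y"
  have m: "?m \<in> pos_cone" using convex_pos_cone[unfolded convex_def] vpow_cone xy uv by blast
  have w: "u *\<^sub>R x + v *\<^sub>R y \<in> pos_cone" using convex_pos_cone[unfolded convex_def] xy uv by blast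
  have "u * f (vpow p x) + v * f (vpow p y) \<le> f ?m"
  proof -
    have "concave_on pos_cone f" using f[unfolded class_C_def] by blast
    then show ?thesis using vpow_cone[OF xy(1)] vpow_cone[OF xy(2)] uv unfolding concave_on_iff by blast
  qed
  also have "\<dots> \<le> f (vpow p (u *\<^sub>R x + v *\<^sub>R y))"
    apply (rule cC_mono[OF f m vpow_cone[OF w]])
    using powr_concave_ineq[OF p] xy uv by (auto simp: vpow_def pos_cone_def)
  finally show ?thesis .
qed

lemma lemB:
  assumes f: "class_C f" and p: "0 < p" "p \<le> 1" and xy: "x \<in> pos_cone" "y \<in> pos_cone"
    and uv: "0 \<le> u" "0 \<le> v" "u + v = 1"
  shows "f (vpow (-p) (u *\<^sub>R x + v *\<^sub>R y)) \<le> u * f (vpow (-p) x) + v * f (vpow (-p) y)"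
proof -
  let ?m = "u *\<^sub>R vpow p x + v *\<^sub>R vpow p y"
  let ?g = "\<lambda>z::real^'a. f (\<chi> i. inverse (z$i))"
  have m: "?m \<in> pos_cone" using convex_pos_cone[unfolded convex_def] vpow_cone xy uv by blast
  have w: "u *\<^sub>R x + v *\<^sub>R y \<in> pos_cone" using convex_pos_cone[unfolded convex_def] xy uv by blast
  have im: "(\<chi> i. inverse (?m$i)) \<in> pos_cone" using m by (simp add: pos_cone_def)
  have cv: "convex_on pos_cone ?g" using f[unfolded class_C_def] by (simp add: concave_on_def)
  have gx: "?g (vpow p z) = f (vpow (-p) z)" for z :: "real^'a"
    by (simp add: vpow_def powr_minus)
  have "f (vpow (-p) (u *\<^sub>R x + v *\<^sub>R y)) \<le> ?g ?m"
  proof (rule cC_mono[OF f vpow_cone[OF w] im])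
    fix i
    have mi: "?m$i > 0" using m by (simp add: pos_cone_def)
    have "?m$i \<le> (u *\<^sub>R x + v *\<^sub>R y)$i powr p"
      using powr_concave_ineq[OF p] xy uv by (auto simp: vpow_def pos_cone_def)
    then show "vpow (-p) (u *\<^sub>R x + v *\<^sub>R y) $ i \<le> (\<chi> i. inverse (?m$i)) $ i"
      using mi by (simp add: vpow_def powr_minus le_imp_inverse_le)
  qed
  also have "\<dots> \<le> u * ?g (vpow p x) + v * ?g (vpow p y)"
    using cv[unfolded convex_on_def] vpow_cone xy uv by blast
  finally show ?thesis by (simp add: gx)
qed

lemma decomp:
  fixes x y :: "real^'n"
  assumes "\<alpha> > 0" "\<beta> > 0" "0 \<le> u" "0 \<le> v" "u + v = 1"
  defines "\<sigma> \<equiv> u * \<alpha> + v * \<beta>"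
  shows "\<sigma> > 0" "u *\<^sub>R x + v *\<^sub>R y = \<sigma> *\<^sub>R ((u * \<alpha> / \<sigma>) *\<^sub>R ((1/\<alpha>) *\<^sub>R x) + (v * \<beta> / \<sigma>) *\<^sub>R ((1/\<beta>) *\<^sub>R y))"
    "u * \<alpha> / \<sigma> \<ge> 0" "v * \<beta> / \<sigma> \<ge> 0" "u * \<alpha> / \<sigma> + v * \<beta> / \<sigma> = 1"
proof -
  show s: "\<sigma> > 0" unfolding \<sigma>_def using assms
    by (smt (verit) mult_nonneg_nonneg mult_pos_pos)
  show "u *\<^sub>R x + v *\<^sub>R y = \<sigma> *\<^sub>R ((u * \<alpha> / \<sigma>) *\<^sub>R ((1/\<alpha>) *\<^sub>R x) + (v * \<beta> / \<sigma>) *\<^sub>R ((1/\<beta>) *\<^sub>R y))"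
    using s assms(1,2) by (simp add: scaleR_add_right)
  show "u * \<alpha> / \<sigma> \<ge> 0" "v * \<beta> / \<sigma> \<ge> 0" using s assms by auto
  show "u * \<alpha> / \<sigma> + v * \<beta> / \<sigma> = 1" using s unfolding \<sigma>_def by (simp add: add_divide_distrib[symmetric])
qed

lemma L1:
  assumes pos: "\<And>x. x \<in> pos_cone \<Longrightarrow> K x > 0"
    and hom: "\<And>x c. x \<in> pos_cone \<Longrightarrow> c > 0 \<Longrightarrow> K (c *\<^sub>R x) = c * K x"
    and lev: "\<And>a b s t. a \<in> pos_cone \<Longrightarrow> b \<in> pos_cone \<Longrightarrow> K a = 1 \<Longrightarrow> K b = 1 \<Longrightarrow>
                0 \<le> s \<Longrightarrow> 0 \<le> t \<Longrightarrow> s + t = 1 \<Longrightarrow> K (s *\<^sub>R a + t *\<^sub>R b) \<ge> 1"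
  shows "concave_on (pos_cone :: (real^'n) set) K"
  unfolding concave_on_iff
proof (intro conjI convex_pos_cone ballI allI impI)
  fix x y :: "real^'n" and u v :: real
  assume xy: "x \<in> pos_cone" "y \<in> pos_cone" and uv: "0 \<le> u" "0 \<le> v" "u + v = 1"
  define \<alpha> where "\<alpha> = K x"
  define \<beta> where "\<beta> = K y"
  have ab: "\<alpha> > 0" "\<beta> > 0" using pos xy \<alpha>_def \<beta>_def by auto
  note d = decomp[OF ab uv]
  note d2 = decomp(2)[OF ab uv, of x y]
  define \<sigma> where "\<sigma> = u * \<alpha> + v * \<beta>"
  have ca: "(1/\<alpha>) *\<^sub>R x \<in> pos_cone" "(1/\<beta>) *\<^sub>R y \<in> pos_cone"
    using xy ab by (auto simp: pos_cone_def)
  have Ka: "K ((1/\<alpha>) *\<^sub>R x) = 1" "K ((1/\<beta>) *\<^sub>R y) = 1"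
    using hom xy ab \<alpha>_def \<beta>_def by auto
  let ?w = "(u * \<alpha> / \<sigma>) *\<^sub>R ((1/\<alpha>) *\<^sub>R x) + (v * \<beta> / \<sigma>) *\<^sub>R ((1/\<beta>) *\<^sub>R y)"
  have w: "?w \<in> pos_cone"
    using convex_pos_cone[unfolded convex_def] ca d(3-5) unfolding \<sigma>_def by blast
  have "K (u *\<^sub>R x + v *\<^sub>R y) = \<sigma> * K ?w"
    using d2 hom[OF w d(1)] unfolding \<sigma>_def by simp
  also have "\<dots> \<ge> \<sigma>"
    using lev[OF ca Ka d(3-5)] d(1) unfolding \<sigma>_def by simp
  finally show "u * K x + v * K y \<le> K (u *\<^sub>R x + v *\<^sub>R y)"
    unfolding \<sigma>_def \<alpha>_def \<beta>_def by simp
qed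

lemma L2:
  assumes pos: "\<And>x. x \<in> pos_cone \<Longrightarrow> H x > 0"
    and hom: "\<And>x c. x \<in> pos_cone \<Longrightarrow> c > 0 \<Longrightarrow> H (c *\<^sub>R x) = H x / c"
    and lev: "\<And>a b s t. a \<in> pos_cone \<Longrightarrow> b \<in> pos_cone \<Longrightarrow> H a = 1 \<Longrightarrow> H b = 1 \<Longrightarrow>
                0 \<le> s \<Longrightarrow> 0 \<le> t \<Longrightarrow> s + t = 1 \<Longrightarrow> H (s *\<^sub>R a + t *\<^sub>R b) \<le> 1"
  shows "convex_on (pos_cone :: (real^'n) set) H"
  unfolding convex_on_def
proof (intro conjI convex_pos_cone ballI allI impI)
  fix x y :: "real^'n" and u v :: real
  assume xy: "x \<in> pos_cone" "y \<in> pos_cone" and uv: "0 \<le> u" "0 \<le> v" "u + v = 1"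
  define \<alpha> where "\<alpha> = 1 / H x"
  define \<beta> where "\<beta> = 1 / H y"
  have ab: "\<alpha> > 0" "\<beta> > 0" using pos xy \<alpha>_def \<beta>_def by auto
  note d = decomp[OF ab uv]
  note d2 = decomp(2)[OF ab uv, of x y]
  define \<sigma> where "\<sigma> = u * \<alpha> + v * \<beta>"
  have ca: "(1/\<alpha>) *\<^sub>R x \<in> pos_cone" "(1/\<beta>) *\<^sub>R y \<in> pos_cone"
    using xy ab by (auto simp: pos_cone_def)
  have Ka: "H ((1/\<alpha>) *\<^sub>R x) = 1" "H ((1/\<beta>) *\<^sub>R y) = 1"
    using hom[OF xy(1), of "1/\<alpha>"] hom[OF xy(2), of "1/\<beta>"] ab pos[OF xy(1)] pos[OF xy(2)] \<alpha>_def \<beta>_def by auto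
  let ?w = "(u * \<alpha> / \<sigma>) *\<^sub>R ((1/\<alpha>) *\<^sub>R x) + (v * \<beta> / \<sigma>) *\<^sub>R ((1/\<beta>) *\<^sub>R y)"
  have w: "?w \<in> pos_cone"
    using convex_pos_cone[unfolded convex_def] ca d(3-5) unfolding \<sigma>_def by blast
  have "H (u *\<^sub>R x + v *\<^sub>R y) = H ?w / \<sigma>"
    using d2 hom[OF w d(1)] unfolding \<sigma>_def by simp
  also have "\<dots> \<le> 1 / \<sigma>"
    using lev[OF ca Ka d(3-5)] d(1) unfolding \<sigma>_def by (simp add: divide_right_mono)
  also have "\<dots> \<le> u * (1/\<alpha>) + v * (1/\<beta>)"
  proof -
    have "convex_on {0<..} (inverse :: real \<Rightarrow> real)" by (rule convex_on_inverse) auto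
    then have "inverse (u * \<alpha> + v * \<beta>) \<le> u * inverse \<alpha> + v * inverse \<beta>"
      using ab uv unfolding convex_on_def by auto
    then show ?thesis unfolding \<sigma>_def by (simp add: inverse_eq_divide)
  qed
  finally show "H (u *\<^sub>R x + v *\<^sub>R y) \<le> u * H x + v * H y"
    unfolding \<alpha>_def \<beta>_def using pos xy by simp
qed

definition Pw :: "real \<Rightarrow> nat \<Rightarrow> real \<Rightarrow> real" where
  "Pw a m t = (\<Prod>j<m. (a - real j)) * t powr (a - real m)"

lemma Pw0: "Pw a 0 = (\<lambda>t. t powr a)"
  by (simp add: Pw_def fun_eq_iff)

lemma Pw_deriv: "t \<in> {0<..} \<Longrightarrow> (Pw a m has_real_derivative Pw a (Suc m) t) (at t)"
  unfolding Pw_def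
  apply (rule derivative_eq_intros has_real_derivative_powr | simp)+
  apply (simp add: algebra_simps diff_diff_eq)
  done

lemma powr_ge1: "0 < (y::real) \<Longrightarrow> (1 \<le> y powr e) \<longleftrightarrow> 0 \<le> e * ln y"
  by (cases "y = 0") (simp_all add: powr_def)
lemma powr_le1: "0 < (y::real) \<Longrightarrow> (y powr e \<le> 1) \<longleftrightarrow> e * ln y \<le> 0"
  by (cases "y = 0") (simp_all add: powr_def)
lemma powr_eq1: "0 < (y::real) \<Longrightarrow> e \<noteq> 0 \<Longrightarrow> y powr e = 1 \<Longrightarrow> y = 1"
  by (cases "y = 0") (simp_all add: powr_def)


lemma pg_neg: "0 < (y::real) \<Longrightarrow> y \<le> 1 \<Longrightarrow> e < 0 \<Longrightarrow> 1 \<le> y powr e"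
  using powr_ge1[of y e] ln_le_zero_iff[of y] by (simp add: mult_nonpos_nonpos)
lemma pg_pos: "1 \<le> (y::real) \<Longrightarrow> e > 0 \<Longrightarrow> 1 \<le> y powr e"
  using powr_ge1[of y e] ln_ge_zero_iff[of y] by simp
lemma pl_pos: "0 < (y::real) \<Longrightarrow> y \<le> 1 \<Longrightarrow> e > 0 \<Longrightarrow> y powr e \<le> 1"
  using powr_le1[of y e] ln_le_zero_iff[of y] by (simp add: mult_nonneg_nonpos)
lemma pl_neg: "1 \<le> (y::real) \<Longrightarrow> e < 0 \<Longrightarrow> y powr e \<le> 1"
  using powr_le1[of y e] ln_ge_zero_iff[of y] by (simp add: mult_nonpos_nonneg)

theorem theorem2p3:
  fixes f :: "real ^ 'n \<Rightarrow> real" and r :: real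
  assumes "class_C f"
    and "-1 \<le> r" and "r \<le> 1" and "r \<noteq> 0"
  shows "class_C (\<lambda>x. (f (\<chi> i. (x $ i) powr r)) powr (1 / r))"
proof -
  note f = assms(1)
  note r = assms(2-4)
  define F where "F = (\<lambda>x::real^'n. (f (\<chi> i. (x $ i) powr r)) powr (1 / r))"
  have Fv: "F x = f (vpow r x) powr (1/r)" for x by (simp add: F_def vpow_def)
  have fpos: "f (vpow p x) > 0" if "x \<in> pos_cone" for x p
    using cC_pos[OF f vpow_cone[OF that]] .
  have Fpos: "F x > 0" if "x \<in> pos_cone" for x
    using fpos[OF that, of r] by (simp add: Fv)
  have fhom: "\<forall>x\<in>pos_cone. \<forall>c>0. f (c *\<^sub>R x) = c * f x" using f by (simp add: class_C_def)
  have vhom: "vpow p (c *\<^sub>R x) = (c powr p) *\<^sub>R vpow p x" if "c > 0" "x \<in> pos_cone" for c p x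
    using that by (simp add: vpow_def vec_eq_iff pos_cone_def powr_mult)
  have fvhom: "f (vpow p (c *\<^sub>R x)) = c powr p * f (vpow p x)" if "c > 0" "x \<in> pos_cone" for c p x
    using vhom[OF that] fhom vpow_cone[OF that(2)] that(1) by simp
  have Phom: "f (vpow p (c *\<^sub>R x)) powr (1/r) = c powr (p/r) * f (vpow p x) powr (1/r)"
    if "c > 0" "x \<in> pos_cone" for c p x
    using fvhom[OF that] fpos[OF that(2)] that(1)
    by (simp add: powr_mult powr_powr)
  have Fhom: "F (c *\<^sub>R x) = c * F x" if "c > 0" "x \<in> pos_cone" for c x
    using Phom[OF that, of r] r that(1) by (simp add: Fv)
  have smooth: "smooth_on pos_cone F"
    unfolding smooth_on_def
  proof
    fix k
    have fk: "Ck_on k pos_cone f" using f by (simp add: class_C_def smooth_on_def)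
    have inner: "Ck_on k pos_cone (\<lambda>x. f (\<chi> i. Pw r 0 (x$i)))"
      by (rule Ck_comp_diag[where T="{0<..}" and P="Pw r", OF _ _ _ open_pos_cone fk])
         (auto simp: Pw0 pos_cone_def Pw_deriv less_imp_neq[symmetric])
    have "Ck_on k pos_cone (\<lambda>x. Pw (1/r) 0 (f (\<chi> i. Pw r 0 (x$i))))"
      by (rule Ck_comp_outer[where T="{0<..}" and G="Pw (1/r)", OF _ inner])
         (use fpos in \<open>auto simp: Pw0 vpow_def Pw_deriv\<close>)
    then show "Ck_on k pos_cone F" by (simp add: Pw0 F_def)
  qed
  have monoF: "\<exists>D. (F has_derivative D) (at x) \<and> D (axis i 1) > 0" if x: "x \<in> pos_cone" for x i
  proof -
    obtain D where D: "(f has_derivative D) (at (vpow r x))" "\<forall>i. D (axis i 1) > 0"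
      using cC_deriv[OF f vpow_cone[OF x]] by blast
    have Dh: "((\<lambda>y. \<chi> i. y$i powr r) has_derivative (\<lambda>v. \<chi> i. r * x$i powr (r - 1) * v$i)) (at x)"
      by (rule diag_deriv[where \<phi>="\<lambda>t. t powr r" and \<phi>'="\<lambda>t. r * t powr (r - 1)"])
         (rule has_real_derivative_powr, use x in \<open>simp add: pos_cone_def\<close>)
    have D1: "((\<lambda>y. f (\<chi> i. y$i powr r)) has_derivative (\<lambda>v. D (\<chi> i. r * x$i powr (r - 1) * v$i))) (at x)"
      using has_derivative_compose[OF Dh D(1)[unfolded vpow_def]] .
    let ?y = "f (\<chi> i. x$i powr r)"
    have "((\<lambda>t. t powr (1/r)) has_real_derivative (1/r) * ?y powr (1/r - 1)) (at ?y)"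
      by (rule has_real_derivative_powr) (rule fpos[OF x, of r, unfolded vpow_def])
    from has_derivative_compose[OF D1 this[unfolded has_field_derivative_def]]
    have D2: "(F has_derivative (\<lambda>v. (1/r) * ?y powr (1/r - 1) * D (\<chi> i. r * x$i powr (r - 1) * v$i))) (at x)"
      by (simp add: F_def vpow_def)
    have "(\<chi> j. r * x$j powr (r - 1) * axis i 1 $ j) = (r * x$i powr (r - 1)) *\<^sub>R (axis i 1 :: real^'n)"
      by (simp add: vec_eq_iff axis_def)
    then have "D (\<chi> j. r * x$j powr (r - 1) * axis i 1 $ j) = r * x$i powr (r - 1) * D (axis i 1)"
      using linear_scale[OF has_derivative_linear[OF D(1)]] by simp
    moreover have "(1/r) * ?y powr (1/r - 1) * (r * x$i powr (r - 1) * D (axis i 1)) > 0"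
    proof -
      have "x$i > 0" "D (axis i 1) > 0" "?y > 0" using D(2) x fpos[OF x, of r, unfolded vpow_def]
        by (auto simp: pos_cone_def)
      then show ?thesis using r by simp
    qed
    ultimately show ?thesis using D2 by auto
  qed
  have conc: "concave_on pos_cone F"
  proof (rule L1[OF Fpos Fhom])
    fix a b :: "real^'n" and s t :: real
    assume ab: "a \<in> pos_cone" "b \<in> pos_cone" and Fab: "F a = 1" "F b = 1"
      and st: "0 \<le> s" "0 \<le> t" "s + t = 1"
    have fa: "f (vpow r a) = 1" "f (vpow r b) = 1"
      using Fab powr_eq1[OF fpos[OF ab(1)], of "1/r" r] powr_eq1[OF fpos[OF ab(2)], of "1/r" r] r by (auto simp: Fv)
    have w: "s *\<^sub>R a + t *\<^sub>R b \<in> pos_cone" using convex_pos_cone[unfolded convex_def] ab st by blast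
    show "F (s *\<^sub>R a + t *\<^sub>R b) \<ge> 1"
    proof (cases "r > 0")
      case True
      have "f (vpow r (s *\<^sub>R a + t *\<^sub>R b)) \<ge> 1"
        using lemA[OF f True r(2) ab st] fa st by simp
      then show ?thesis using True by (simp add: Fv pg_pos)
    next
      case False
      then have p: "0 < -r" "-r \<le> 1" using r by auto
      have "f (vpow r (s *\<^sub>R a + t *\<^sub>R b)) \<le> 1"
        using lemB[OF f p ab st] fa st by simp
      then show ?thesis using False r fpos[OF w, of r] by (simp add: Fv pg_neg)
    qed
  qed
  define H where "H = (\<lambda>x::real^'n. f (vpow (-r) x) powr (1/r))"
  have HF: "F (\<chi> i. inverse (x$i)) = H x" for x
    by (simp add: Fv H_def vpow_def inverse_powr powr_minus)
  have Hpos: "H x > 0" if "x \<in> pos_cone" for x using fpos[OF that, of "-r"] by (simp add: H_def)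
  have Hhom: "H (c *\<^sub>R x) = H x / c" if "c > 0" "x \<in> pos_cone" for c x
    using Phom[OF that, of "-r"] r that(1) by (simp add: H_def powr_minus divide_inverse)
  have convH: "convex_on pos_cone H"
  proof (rule L2[OF Hpos Hhom])
    fix a b :: "real^'n" and s t :: real
    assume ab: "a \<in> pos_cone" "b \<in> pos_cone" and Hab: "H a = 1" "H b = 1"
      and st: "0 \<le> s" "0 \<le> t" "s + t = 1"
    have fa: "f (vpow (-r) a) = 1" "f (vpow (-r) b) = 1"
      using Hab powr_eq1[OF fpos[OF ab(1)], of "1/r" "-r"] powr_eq1[OF fpos[OF ab(2)], of "1/r" "-r"] r by (auto simp: H_def)
    have w: "s *\<^sub>R a + t *\<^sub>R b \<in> pos_cone" using convex_pos_cone[unfolded convex_def] ab st by blast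
    show "H (s *\<^sub>R a + t *\<^sub>R b) \<le> 1"
    proof (cases "r > 0")
      case True
      have "f (vpow (-r) (s *\<^sub>R a + t *\<^sub>R b)) \<le> 1"
        using lemB[OF f True r(2) ab st] fa st by simp
      then show ?thesis using True fpos[OF w, of "-r"] by (simp add: H_def pl_pos)
    next
      case False
      then have p: "0 < -r" "-r \<le> 1" using r by auto
      have "f (vpow (-r) (s *\<^sub>R a + t *\<^sub>R b)) \<ge> 1"
        using lemA[OF f p ab st] fa st by simp
      then show ?thesis using False r by (simp add: H_def pl_neg)
    qed
  qed
  have invc: "concave_on pos_cone (\<lambda>x. - F (\<chi> i. inverse (x $ i)))"
    using convH by (simp add: concave_on_def HF)
  show ?thesis
    unfolding F_def[symmetric] class_C_def
    using smooth Fhom monoF conc invc by blast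
qed

end
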